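(* For every $i\ge1$ there exist $d\in\mathbb{N}$, $k=2$ actions, a policy $\pi(a|s)>0$, and two families $M=(M^0,M^1)$, $W=(W^0,W^1)$ of nonnegative $d\times d$ matrices with $\sum_{s'}M^a_{ss'}=\sum_{s'}W^a_{ss'}=\pi(a|s)$ for all $a,s$, such that $M^+$ and $W^+$ have the same zero pattern (and hence so do $(M^+)^j$ and $(W^+)^j$ for all $j$), and such that for every $j\in\{1,\dots,i\}$ and every action sequence $a_1,\dots,a_j$, $$M^{a_1}M^{a_2}\cdots M^{a_j}\oslash(M^+)^j=W^{a_1}W^{a_2}\cdots W^{a_j}\oslash(W^+)^j,$$ but for some action sequence $a_1,\dots,a_{i+1}$, $$M^{a_1}\cdots M^{a_{i+1}}\oslash(M^+)^{i+1}\ne W^{a_1}\cdots W^{a_{i+1}}\oslash(W^+)^{i+1}.$$ Consequently, each of the following can fail for suitable such $M$ (with $W$ ranging over families with the same policy): (i) $B^a$ determines $M$; (ii) $B^a$ and $B^{aa'}$ determine $M$; (iii) $B^a$ determines all multi-step inverse models $B^{a_1\cdots a_j}$; (iv) $B^a$ and $B^{aa'}$ determine all $B^{a_1\cdots a_j}$; (v) $B^a$ determines $B^{a+}$; (vi) $B^a$ and $B^{a+}$ determine $B^{a++}$.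
   Context: Products are ordinary matrix products, $(M^+)^j$ is the $j$-th matrix power of $M^+=\sum_aM^a$, and $\oslash$ is entrywise division, with the convention that an entry $0/0$ is "undefined" and two undefined entries count as equal (they occur at the same positions for $M$ and $W$ by the zero-pattern condition). For a family $M$, $B^{a_1\cdots a_j}:=M^{a_1}\cdots M^{a_j}\oslash(M^+)^j$ (the inverse model $p(a_1\dots a_j|s,s^j)$), $B^{a+}:=M^aM^+\oslash(M^+)^2$, $B^{a++}:=M^a(M^+)^2\oslash(M^+)^3$. "$X$ determines $Y$" for $M$ means: every family $W$ with the same policy whose $X$-quantities equal those of $M$ also has the same $Y$-quantities (for (i),(ii): $W=M$). *)

theory Defs
  imports Complex_Main
begin

text \<open>d x d real matrices are functions nat => nat => real, only indices < d matter.  A policy pol maps (a, s) to pol a s.\<close>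

definition mmult :: "nat \<Rightarrow> (nat \<Rightarrow> nat \<Rightarrow> real) \<Rightarrow> (nat \<Rightarrow> nat \<Rightarrow> real) \<Rightarrow> (nat \<Rightarrow> nat \<Rightarrow> real)" where
  "mmult d A B = (\<lambda>i j. \<Sum>l<d. A i l * B l j)"

definition mone :: "nat \<Rightarrow> nat \<Rightarrow> real" where
  "mone = (\<lambda>i j. if i = j then 1 else 0)"

fun mpow :: "nat \<Rightarrow> (nat \<Rightarrow> nat \<Rightarrow> real) \<Rightarrow> nat \<Rightarrow> (nat \<Rightarrow> nat \<Rightarrow> real)" where
  "mpow d A 0 = mone"
| "mpow d A (Suc n) = mmult d A (mpow d A n)"

definition mplus :: "nat \<Rightarrow> (nat \<Rightarrow> nat \<Rightarrow> nat \<Rightarrow> real) \<Rightarrow> (nat \<Rightarrow> nat \<Rightarrow> real)" where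
  "mplus k M = (\<lambda>i j. \<Sum>a<k. M a i j)"

definition mprod :: "nat \<Rightarrow> (nat \<Rightarrow> nat \<Rightarrow> nat \<Rightarrow> real) \<Rightarrow> nat list \<Rightarrow> (nat \<Rightarrow> nat \<Rightarrow> real)" where
  "mprod d M as = foldr (\<lambda>a P. mmult d (M a) P) as mone"

text \<open>entrywise division; an entry with zero denominator is "undefined" (None);
  two undefined entries are equal.\<close>
definition ediv :: "(nat \<Rightarrow> nat \<Rightarrow> real) \<Rightarrow> (nat \<Rightarrow> nat \<Rightarrow> real) \<Rightarrow> (nat \<Rightarrow> nat \<Rightarrow> real option)" where
  "ediv A B = (\<lambda>i j. if B i j = 0 then None else Some (A i j / B i j))"

definition meq :: "nat \<Rightarrow> (nat \<Rightarrow> nat \<Rightarrow> 'b) \<Rightarrow> (nat \<Rightarrow> nat \<Rightarrow> 'b) \<Rightarrow> bool" where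
  "meq d A B \<longleftrightarrow> (\<forall>i<d. \<forall>j<d. A i j = B i j)"

definition Binv :: "nat \<Rightarrow> nat \<Rightarrow> (nat \<Rightarrow> nat \<Rightarrow> nat \<Rightarrow> real) \<Rightarrow> nat list \<Rightarrow> (nat \<Rightarrow> nat \<Rightarrow> real option)" where
  "Binv d k M as = ediv (mprod d M as) (mpow d (mplus k M) (length as))"

definition Bplus :: "nat \<Rightarrow> nat \<Rightarrow> (nat \<Rightarrow> nat \<Rightarrow> nat \<Rightarrow> real) \<Rightarrow> nat \<Rightarrow> (nat \<Rightarrow> nat \<Rightarrow> real option)" where
  "Bplus d k M a = ediv (mmult d (M a) (mplus k M)) (mpow d (mplus k M) 2)"

definition Bplusplus :: "nat \<Rightarrow> nat \<Rightarrow> (nat \<Rightarrow> nat \<Rightarrow> nat \<Rightarrow> real) \<Rightarrow> nat \<Rightarrow> (nat \<Rightarrow> nat \<Rightarrow> real option)" where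
  "Bplusplus d k M a = ediv (mmult d (M a) (mpow d (mplus k M) 2)) (mpow d (mplus k M) 3)"

definition pos_policy :: "nat \<Rightarrow> nat \<Rightarrow> (nat \<Rightarrow> nat \<Rightarrow> real) \<Rightarrow> bool" where
  "pos_policy d k pol \<longleftrightarrow> (\<forall>a<k. \<forall>s<d. pol a s > 0)"

definition family :: "nat \<Rightarrow> nat \<Rightarrow> (nat \<Rightarrow> nat \<Rightarrow> real) \<Rightarrow> (nat \<Rightarrow> nat \<Rightarrow> nat \<Rightarrow> real) \<Rightarrow> bool" where
  "family d k pol M \<longleftrightarrow>
     (\<forall>a<k. \<forall>s<d. \<forall>s'<d. M a s s' \<ge> 0) \<and>
     (\<forall>a<k. \<forall>s<d. (\<Sum>s'<d. M a s s') = pol a s)"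

definition actseq :: "nat \<Rightarrow> nat list \<Rightarrow> bool" where
  "actseq k as \<longleftrightarrow> (\<forall>a\<in>set as. a < k)"

end

theory Submission
  imports Defs
begin


fun cp :: "(nat \<Rightarrow> nat \<Rightarrow> real) \<Rightarrow> (nat \<Rightarrow> nat) \<Rightarrow> nat list \<Rightarrow> nat \<Rightarrow> real" where
  "cp c f [] s = 1"
| "cp c f (a#as) s = c a s * cp c f as (f s)"

lemma mprod_Cons: "mprod d N (a#as) = mmult d (N a) (mprod d N as)"
  by (simp add: mprod_def)

lemma mprod_Nil: "mprod d N [] = mone"
  by (simp add: mprod_def)

lemma mpow_as_mprod: "mpow d A n = mprod d (\<lambda>_. A) (replicate n 0)"
  by (induction n) (simp_all add: mprod_def)

lemma det_rows:
  assumes N: "\<And>a s l. 0 < s \<Longrightarrow> s < d \<Longrightarrow> l < d \<Longrightarrow> N a s l = c a s * (if l = f s then 1 else 0)"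
    and f: "\<And>s. 0 < s \<Longrightarrow> s < d \<Longrightarrow> 0 < f s \<and> f s < d"
  shows "0 < s \<Longrightarrow> s < d \<Longrightarrow> mprod d N as s s' = cp c f as s * (if s' = (f ^^ length as) s then 1 else 0)"
proof (induction as arbitrary: s)
  case Nil
  then show ?case by (simp add: mprod_Nil mone_def)
next
  case (Cons a as)
  have fs: "0 < f s" "f s < d" using f Cons.prems by auto
  have "mprod d N (a#as) s s' = (\<Sum>l<d. N a s l * mprod d N as l s')"
    by (simp add: mprod_Cons mmult_def)
  also have "\<dots> = (\<Sum>l<d. if l = f s then c a s * mprod d N as (f s) s' else 0)"
    by (rule sum.cong) (auto simp: N Cons.prems)
  also have "\<dots> = c a s * mprod d N as (f s) s'"
    using fs by simp
  also have "\<dots> = cp c f (a#as) s * (if s' = (f ^^ length (a#as)) s then 1 else 0)"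
    using Cons.IH[OF fs] by (simp add: funpow_swap1)
  finally show ?case .
qed

definition dd :: "nat \<Rightarrow> nat" where "dd i = 2*i+2"

definition polg :: "nat \<Rightarrow> nat \<Rightarrow> nat \<Rightarrow> real" where
  "polg i a s = (if s = i+2 then (if a = 0 then 1/4 else 3/4) else 1/2)"

definition sc :: "nat \<Rightarrow> nat \<Rightarrow> nat" where
  "sc i s = (if s \<le> i then s+1 else if s = i+1 then i+1 else if s < 2*i+1 then s+1 else i+1)"

definition Pg :: "nat \<Rightarrow> real \<Rightarrow> nat \<Rightarrow> nat \<Rightarrow> real" where
  "Pg i p s s' = (if s = 0 then (if s' = 1 then p else if s' = i+2 then 1-p else 0)
                  else if s' = sc i s then 1 else 0)"

definition Mg :: "nat \<Rightarrow> real \<Rightarrow> nat \<Rightarrow> nat \<Rightarrow> nat \<Rightarrow> real" where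
  "Mg i p a s s' = polg i a s * Pg i p s s'"

lemma mplus_Mg: "mplus 2 (Mg i p) = Pg i p"
  by (rule ext, rule ext) (simp add: mplus_def Mg_def polg_def eval_nat_numeral algebra_simps)

lemma sc_range: "0 < s \<Longrightarrow> s < dd i \<Longrightarrow> 0 < sc i s \<and> sc i s < dd i"
  by (auto simp: sc_def dd_def)

lemma Mg_rows: "0 < s \<Longrightarrow> s < dd i \<Longrightarrow> l < dd i \<Longrightarrow>
   Mg i p a s l = polg i a s * (if l = sc i s then 1 else 0)"
  by (simp add: Mg_def Pg_def)

lemma Pg_rows: "0 < s \<Longrightarrow> s < dd i \<Longrightarrow> l < dd i \<Longrightarrow>
   Pg i p s l = (\<lambda>_ _. 1) a s * (if l = sc i s then 1 else 0)"
  by (simp add: Pg_def)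

lemma cp_one: "cp (\<lambda>_ _. 1) f as s = 1"
  by (induction as arbitrary: s) auto

lemma mprod_Mg: "0 < s \<Longrightarrow> s < dd i \<Longrightarrow>
   mprod (dd i) (Mg i p) as s s' = cp (polg i) (sc i) as s * (if s' = (sc i ^^ length as) s then 1 else 0)"
  by (rule det_rows[OF Mg_rows sc_range])

lemma mpow_Pg: "0 < s \<Longrightarrow> s < dd i \<Longrightarrow>
   mpow (dd i) (Pg i p) n s s' = (if s' = (sc i ^^ n) s then 1 else 0)"
  unfolding mpow_as_mprod
  apply (subst det_rows[OF Pg_rows sc_range])
  by (auto simp: cp_one)

lemma sum_two: fixes A :: real shows "(x::nat) < d \<Longrightarrow> y < d \<Longrightarrow> x \<noteq> y \<Longrightarrow>
   (\<Sum>l<d. (if l = x then A else if l = y then B else 0) * g l) = A * g x + B * g y"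
proof -
  assume h: "x < d" "y < d" "x \<noteq> y"
  have "(\<Sum>l<d. (if l = x then A else if l = y then B else 0) * g l)
      = (\<Sum>l<d. (if l = x then A * g x else 0) + (if l = y then B * g y else 0))"
    by (rule sum.cong) (use h in auto)
  also have "\<dots> = A * g x + B * g y" using h by (simp add: sum.distrib)
  finally show ?thesis .
qed

lemma mprod_Mg0: "1 \<le> i \<Longrightarrow>
   mprod (dd i) (Mg i p) (a#as) 0 s' = polg i a 0 *
      (p * mprod (dd i) (Mg i p) as 1 s' + (1-p) * mprod (dd i) (Mg i p) as (i+2) s')"
proof -
  assume i: "1 \<le> i"
  have "mprod (dd i) (Mg i p) (a#as) 0 s' = (\<Sum>l<dd i. polg i a 0 * ((if l = 1 then p else if l = i+2 then 1-p else 0) * mprod (dd i) (Mg i p) as l s'))"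
    unfolding mprod_Cons mmult_def by (rule sum.cong) (auto simp: Mg_def Pg_def)
  also have "\<dots> = polg i a 0 * (\<Sum>l<dd i. (if l = 1 then p else if l = i+2 then 1-p else 0) * mprod (dd i) (Mg i p) as l s')"
    by (simp only: sum_distrib_left)
  also have "\<dots> = polg i a 0 * (p * mprod (dd i) (Mg i p) as 1 s' + (1-p) * mprod (dd i) (Mg i p) as (i+2) s')"
    using i by (subst sum_two) (auto simp: dd_def)
  finally show ?thesis .
qed

lemma mpow_Pg0: "1 \<le> i \<Longrightarrow>
   mpow (dd i) (Pg i p) (Suc n) 0 s' =
      p * mpow (dd i) (Pg i p) n 1 s' + (1-p) * mpow (dd i) (Pg i p) n (i+2) s'"
proof -
  assume i: "1 \<le> i"
  have "mpow (dd i) (Pg i p) (Suc n) 0 s' = (\<Sum>l<dd i. (if l = 1 then p else if l = i+2 then 1-p else 0) * mpow (dd i) (Pg i p) n l s')"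
    unfolding mpow.simps mmult_def by (rule sum.cong) (auto simp: Pg_def)
  also have "\<dots> = p * mpow (dd i) (Pg i p) n 1 s' + (1-p) * mpow (dd i) (Pg i p) n (i+2) s'"
    using i by (subst sum_two) (auto simp: dd_def)
  finally show ?thesis .
qed

lemma iter_u: "j \<le> i \<Longrightarrow> (sc i ^^ j) 1 = 1 + j"
  by (induction j) (auto simp: sc_def)

lemma iter_v: "j < i \<Longrightarrow> (sc i ^^ j) (Suc (Suc i)) = i + 2 + j"
  by (induction j) (auto simp: sc_def)

lemma iter_v_end: "1 \<le> i \<Longrightarrow> (sc i ^^ i) (Suc (Suc i)) = i + 1"
proof -
  assume i: "1 \<le> i"
  then obtain k where k: "i = Suc k" by (cases i) auto
  have "(sc i ^^ i) (Suc (Suc i)) = sc i ((sc i ^^ k) (i+2))" by (simp add: k)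
  also have "\<dots> = sc i (i + 2 + k)" using k iter_v[of k i] by simp
  also have "\<dots> = i + 1" using k by (simp add: sc_def)
  finally show ?thesis .
qed


lemma Binv_pos: "0 < s \<Longrightarrow> s < dd i \<Longrightarrow>
  Binv (dd i) 2 (Mg i p) as s s' =
   (if s' = (sc i ^^ length as) s then Some (cp (polg i) (sc i) as s) else None)"
  by (simp add: Binv_def ediv_def mplus_Mg mprod_Mg mpow_Pg)

lemma Binv_zero: "1 \<le> i \<Longrightarrow> 0 < p \<Longrightarrow> p < 1 \<Longrightarrow> length as < i \<Longrightarrow>
  Binv (dd i) 2 (Mg i p) (a#as) 0 s' =
   (if s' = 1 + length as then Some (polg i a 0 * cp (polg i) (sc i) as 1)
    else if s' = i + 2 + length as then Some (polg i a 0 * cp (polg i) (sc i) as (i+2)) else None)"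
proof -
  assume h: "1 \<le> i" "0 < p" "p < 1" "length as < i"
  have d: "0 < (1::nat)" "1 < dd i" "0 < Suc (Suc i)" "Suc (Suc i) < dd i" using h by (auto simp: dd_def)
  show ?thesis using h
  by (simp add: Binv_def ediv_def mplus_Mg mpow_Pg0 mprod_Mg0 mprod_Mg[OF d(1,2)] mprod_Mg[OF d(3,4)]
     mpow_Pg[OF d(1,2)] mpow_Pg[OF d(3,4)] iter_u iter_v del: mpow.simps One_nat_def)
qed

lemma main_eq: assumes "1 \<le> i" "1 \<le> length as" "length as \<le> i" "s < dd i" shows "
  Binv (dd i) 2 (Mg i (1/2)) as s s' = Binv (dd i) 2 (Mg i (1/3)) as s s'"
proof (cases "s = 0")
  case True
  note h = assms
  then obtain a as' where as: "as = a#as'" by (cases as) auto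
  show ?thesis using h True by (simp add: as Binv_zero del: One_nat_def)
next
  case False
  then show ?thesis using assms
    by (simp add: Binv_pos)
qed

definition Inv :: "nat \<Rightarrow> nat \<Rightarrow> bool" where
  "Inv i s \<longleftrightarrow> 1 \<le> s \<and> s \<le> 2*i+1 \<and> s \<noteq> i+2"

lemma cp_half: "Inv i s \<Longrightarrow> cp (polg i) (sc i) (replicate k 0) s = (1/2)^k"
proof (induction k arbitrary: s)
  case 0 then show ?case by simp
next
  case (Suc k)
  have "Inv i (sc i s)" using Suc.prems by (auto simp: Inv_def sc_def)
  then show ?case using Suc by (simp add: polg_def Inv_def)
qed

lemma cp_v: "1 \<le> i \<Longrightarrow> cp (polg i) (sc i) (replicate i 0) (Suc (Suc i)) = (1/4) * (1/2)^(i-1)"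
proof -
  assume "1 \<le> i"
  then obtain k where k: "i = Suc k" by (cases i) auto
  have "Inv i (sc i (i+2))" by (auto simp: Inv_def sc_def k)
  then show ?thesis by (simp add: k cp_half polg_def)
qed

lemma main_neq: "1 \<le> i \<Longrightarrow> 0 < p \<Longrightarrow> p < 1 \<Longrightarrow>
  Binv (dd i) 2 (Mg i p) (replicate (i+1) 0) 0 (i+1) =
    Some (1/2 * (p * (1/2)^i + (1-p) * ((1/4) * (1/2)^(i-1))))"
proof -
  assume h: "1 \<le> i" "0 < p" "p < 1"
  have u: "cp (polg i) (sc i) (replicate i 0) 1 = (1/2)^i"
    by (rule cp_half) (use h in \<open>auto simp: Inv_def\<close>)
  have d: "0 < (1::nat)" "1 < dd i" "0 < Suc (Suc i)" "Suc (Suc i) < dd i" using h by (auto simp: dd_def)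
  have r: "replicate (i+1) (0::nat) = 0 # replicate i 0" by simp
  show ?thesis using h unfolding r
    by (simp add: Binv_def ediv_def mplus_Mg mpow_Pg0 mprod_Mg0 mprod_Mg[OF d(1,2)] mprod_Mg[OF d(3,4)]
     mpow_Pg[OF d(1,2)] mpow_Pg[OF d(3,4)] iter_u iter_v_end u cp_v polg_def del: mpow.simps One_nat_def replicate.simps)
qed


lemma rowsum_Pg: assumes "1 \<le> i" "s < dd i" shows "(\<Sum>s'<dd i. Pg i p s s') = 1"
proof (cases "s = 0")
  case True
  have "(\<Sum>s'<dd i. Pg i p s s') = (\<Sum>s'<dd i. (if s' = 1 then p else if s' = i+2 then 1-p else 0) * (\<lambda>_. 1) s')"
    using True by (simp add: Pg_def)
  also have "\<dots> = 1" using assms by (subst sum_two) (auto simp: dd_def)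
  finally show ?thesis .
next
  case False
  then have "0 < s" by simp
  then have "sc i s < dd i" using sc_range assms by blast
  then show ?thesis using False by (simp add: Pg_def)
qed

lemma family_Mg: assumes "1 \<le> i" "0 \<le> p" "p \<le> 1" shows "family (dd i) 2 (polg i) (Mg i p)"
  unfolding family_def
proof (intro conjI allI impI)
  fix a s s' assume "a < (2::nat)" "s < dd i" "s' < dd i"
  show "0 \<le> Mg i p a s s'" using assms by (auto simp: Mg_def Pg_def polg_def)
next
  fix a s assume "a < (2::nat)" "s < dd i"
  have "(\<Sum>s'<dd i. Mg i p a s s') = polg i a s * (\<Sum>s'<dd i. Pg i p s s')"
    by (simp add: Mg_def sum_distrib_left)
  then show "(\<Sum>s'<dd i. Mg i p a s s') = polg i a s" using rowsum_Pg assms \<open>s < dd i\<close> by simp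
qed

lemma pos_polg: "pos_policy (dd i) 2 (polg i)"
  by (auto simp: pos_policy_def polg_def)

lemma zero_pat: "mplus 2 (Mg i (1/2)) s s' = 0 \<longleftrightarrow> mplus 2 (Mg i (1/3)) s s' = 0"
  by (simp add: mplus_Mg Pg_def)

lemma part1: "1 \<le> i \<Longrightarrow>
     (\<exists>d pol M W. pos_policy d 2 pol \<and> family d 2 pol M \<and> family d 2 pol W \<and>
        (\<forall>s<d. \<forall>s'<d. (mplus 2 M s s' = 0 \<longleftrightarrow> mplus 2 W s s' = 0)) \<and>
        (\<forall>as. actseq 2 as \<and> 1 \<le> length as \<and> length as \<le> i \<longrightarrow>
              meq d (Binv d 2 M as) (Binv d 2 W as)) \<and>
        (\<exists>as. actseq 2 as \<and> length as = i + 1 \<and>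
              \<not> meq d (Binv d 2 M as) (Binv d 2 W as)) \<and>
        \<not> (\<forall>a<2. meq d (M a) (W a)))"
proof -
  assume i: "1 \<le> i"
  have neq: "Binv (dd i) 2 (Mg i (1/2)) (replicate (i+1) 0) 0 (i+1) \<noteq> Binv (dd i) 2 (Mg i (1/3)) (replicate (i+1) 0) 0 (i+1)"
  proof -
    have "(1::real)/2 * ((1/2) * (1/2)^i + (1-1/2) * ((1/4) * (1/2)^(i-1))) \<noteq> 1/2 * ((1/3) * (1/2)^i + (1-1/3) * ((1/4) * (1/2)^(i-1)))"
    proof -
      obtain k where k: "i = Suc k" using i by (cases i) auto
      have "(0::real) < (1/2)^k" by simp
      then show ?thesis unfolding k by (simp add: field_simps)
    qed
    then show ?thesis using i by (simp only: main_neq) simp_all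
  qed
  show ?thesis
  proof (intro exI conjI)
    show "pos_policy (dd i) 2 (polg i)" by (rule pos_polg)
    show "family (dd i) 2 (polg i) (Mg i (1/2))" using i by (intro family_Mg) auto
    show "family (dd i) 2 (polg i) (Mg i (1/3))" using i by (intro family_Mg) auto
    show "\<forall>s<dd i. \<forall>s'<dd i. (mplus 2 (Mg i (1/2)) s s' = 0 \<longleftrightarrow> mplus 2 (Mg i (1/3)) s s' = 0)"
      using zero_pat by blast
    show "\<forall>as. actseq 2 as \<and> 1 \<le> length as \<and> length as \<le> i \<longrightarrow>
              meq (dd i) (Binv (dd i) 2 (Mg i (1/2)) as) (Binv (dd i) 2 (Mg i (1/3)) as)"
      using i main_eq by (auto simp: meq_def)
    show "actseq 2 (replicate (i+1) 0)" by (simp add: actseq_def)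
    show "length (replicate (i+1) (0::nat)) = i + 1" by simp
    show "\<not> meq (dd i) (Binv (dd i) 2 (Mg i (1/2)) (replicate (i+1) 0)) (Binv (dd i) 2 (Mg i (1/3)) (replicate (i+1) 0))"
      unfolding meq_def
    proof (intro notI)
      assume "\<forall>ia<dd i. \<forall>j<dd i. Binv (dd i) 2 (Mg i (1/2)) (replicate (i+1) 0) ia j = Binv (dd i) 2 (Mg i (1/3)) (replicate (i+1) 0) ia j"
      moreover have "0 < dd i" "i+1 < dd i" by (auto simp: dd_def)
      ultimately show False using neq by blast
    qed
    show "\<not> (\<forall>a<2. meq (dd i) (Mg i (1/2) a) (Mg i (1/3) a))"
    proof
      assume "\<forall>a<2. meq (dd i) (Mg i (1/2) a) (Mg i (1/3) a)"
      then have "Mg i (1/2) 0 0 1 = Mg i (1/3) 0 0 1" by (auto simp: meq_def dd_def)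
      then show False by (simp add: Mg_def Pg_def polg_def)
    qed
  qed
qed



definition nx :: "nat \<Rightarrow> nat" where "nx s = (if s = 1 then 4 else if s = 3 then 5 else if s = 4 \<or> s = 5 then 6 else s)"

definition Mw :: "real \<Rightarrow> real \<Rightarrow> real \<Rightarrow> nat \<Rightarrow> nat \<Rightarrow> nat \<Rightarrow> real" where
  "Mw x y z a s s' = (if s = 0 then (if a = 0 then (if s'=1 then x else if s'=3 then z/2 else 0)
      else (if s'=2 then y else if s'=3 then z/2 else 0)) else if s' = nx s then 1/2 else 0)"

definition Pw :: "real \<Rightarrow> real \<Rightarrow> real \<Rightarrow> nat \<Rightarrow> nat \<Rightarrow> real" where
  "Pw x y z s s' = (if s = 0 then (if s'=1 then x else if s'=2 then y else if s'=3 then z else 0)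
      else if s' = nx s then 1 else 0)"

lemma allS: "(\<forall>i<Suc n. P i) \<longleftrightarrow> (\<forall>i<n. P i) \<and> P n"
  using less_Suc_eq by auto
lemma all7: "(\<forall>i<(7::nat). P i) \<longleftrightarrow> P 0 \<and> P 1 \<and> P 2 \<and> P 3 \<and> P 4 \<and> P 5 \<and> P 6"
proof -
  have "(7::nat) = Suc (Suc (Suc (Suc (Suc (Suc (Suc 0))))))" by simp
  then show ?thesis by (simp only: allS) (simp add: numeral_eq_Suc conj_ac)
qed
lemma all2: "(\<forall>i<(2::nat). P i) \<longleftrightarrow> P 0 \<and> P 1"
proof -
  have "(2::nat) = Suc (Suc 0)" by simp
  then show ?thesis by (simp only: allS) (simp add: numeral_eq_Suc conj_ac)
qed
lemma sum7: "(\<Sum>i<(7::nat). f i) = f 0 + f 1 + f 2 + f 3 + f 4 + f 5 + (f 6 :: real)"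
  by (simp add: numeral_eq_Suc)
lemma sum2: "(\<Sum>i<(2::nat). f i) = f 0 + (f 1 :: real)"
  by (simp add: numeral_eq_Suc)

lemma mpw: "mplus 2 (Mw x y z) = Pw x y z"
  by (rule ext, rule ext) (auto simp: mplus_def sum2 Mw_def Pw_def)

lemma P2: "\<forall>s<7. \<forall>s'<7. mpow 7 (Pw x y z) 2 s s' =
   (if s = 0 then (if s' = 4 then x else if s' = 2 then y else if s' = 5 then z else 0)
    else if s' = nx (nx s) then 1 else 0)"
  unfolding all7 by (simp add: numeral_2_eq_2 mmult_def sum7 mone_def Pw_def nx_def)

lemma mmult_mone: "s' < d \<Longrightarrow> mmult d A mone s s' = A s s'"
proof -
  assume h: "s' < d"
  have "mmult d A mone s s' = (\<Sum>l<d. if l = s' then A s s' else 0)"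
    unfolding mmult_def mone_def by (rule sum.cong) auto
  then show ?thesis using h by simp
qed

lemma Binv1: "s' < d \<Longrightarrow> Binv d k M [a] s s' = ediv (M a) (mplus k M) s s'"
  by (simp add: Binv_def mprod_def ediv_def mmult_mone)

lemma Bplus_alt: "Bplus d k M a s s' = ediv (mmult d (M a) (mplus k M)) (mpow d (mplus k M) 2) s s'"
  by (simp add: Bplus_def)

lemma nx_ne0: "s \<noteq> 0 \<Longrightarrow> s < 7 \<Longrightarrow> nx s \<noteq> 0 \<and> nx s < 7"
  by (auto simp: nx_def)

lemma mm_rows: assumes "s < 7" shows "mmult 7 (Mw x y z a) B s t =
   (if s = 0 then (if a = 0 then x * B 1 t + z/2 * B 3 t else y * B 2 t + z/2 * B 3 t)
    else 1/2 * B (nx s) t)"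
proof (cases "s = 0")
  case True then show ?thesis by (simp add: mmult_def sum7 Mw_def)
next
  case False
  have "mmult 7 (Mw x y z a) B s t = (\<Sum>l<7. if l = nx s then 1/2 * B (nx s) t else 0)"
    unfolding mmult_def by (rule sum.cong) (auto simp: Mw_def False)
  then show ?thesis using False nx_ne0[OF False assms] by simp
qed

lemma P2': "s < 7 \<Longrightarrow> s' < 7 \<Longrightarrow> mpow 7 (Pw x y z) 2 s s' =
   (if s = 0 then (if s' = 4 then x else if s' = 2 then y else if s' = 5 then z else 0)
    else if s' = nx (nx s) then 1 else 0)"
  using P2 by blast

lemma Pw_row0: "mmult 7 (Pw x y z) B 0 t = x * B 1 t + y * B 2 t + z * B 3 t"
  by (simp add: mmult_def sum7 Pw_def)

lemma Bpp06: "Bplusplus 7 2 (Mw x y z) 0 0 6 =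
   (if x + z = 0 then None else Some ((x + z/2) / (x + z)))"
proof -
  have e: "mpow 7 (Pw x y z) 3 = mmult 7 (Pw x y z) (mpow 7 (Pw x y z) 2)"
    by (subst mpow.simps(2)[symmetric]) (simp del: mpow.simps)
  show ?thesis unfolding Bplusplus_def mpw e
    by (simp add: mm_rows Pw_row0 P2' nx_def ediv_def del: mpow.simps)
qed

lemma Binv_form: "0 < x \<Longrightarrow> 0 < y \<Longrightarrow> 0 < z \<Longrightarrow> s' < 7 \<Longrightarrow> Binv 7 2 (Mw x y z) [a] s s' =
  (if s = 0 then (if s'=1 then Some(if a=0 then 1 else 0) else if s'=2 then Some(if a=0 then 0 else 1)
     else if s'=3 then Some(1/2) else None) else if s'=nx s then Some(1/2) else None)" (is "_ \<Longrightarrow> _ \<Longrightarrow> _ \<Longrightarrow> _ \<Longrightarrow> _ = ?rhs")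
proof -
  assume h: "0 < x" "0 < y" "0 < z" "s' < 7"
  have e: "Binv 7 2 (Mw x y z) [a] s s' = ediv (Mw x y z a) (Pw x y z) s s'"
    using Binv1[OF h(4), of 2 "Mw x y z" a s] mpw by simp
  show ?thesis unfolding e
  proof (cases "s = 0")
    case True then show "ediv (Mw x y z a) (Pw x y z) s s' = ?rhs" using h by (simp add: ediv_def Mw_def Pw_def)
  next
    case False then show "ediv (Mw x y z a) (Pw x y z) s s' = ?rhs" using h by (simp add: ediv_def Mw_def Pw_def)
  qed
qed

lemma Bplus_form: assumes "0 < x" "0 < y" "0 < z" "s < 7" "t < 7"
  shows "Bplus 7 2 (Mw x y z) a s t =
   (if s = 0 then (if t = 4 then Some(if a=0 then 1 else 0) else if t = 2 then Some(if a=0 then 0 else 1)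
      else if t = 5 then Some(1/2) else None) else if t = nx (nx s) then Some(1/2) else None)"
proof (cases "s = 0")
  case True
  then show ?thesis using assms
    by (simp add: Bplus_alt mpw mm_rows P2' ediv_def nx_def Pw_def)
next
  case False
  have pw: "Pw x y z (nx s) t = (if t = nx (nx s) then 1 else 0)"
    using nx_ne0[OF False assms(4)] by (simp add: Pw_def)
  have p2: "mpow 7 (Pw x y z) 2 s t = (if t = nx (nx s) then 1 else 0)"
    using P2'[OF assms(4,5)] False by simp
  have mm: "mmult 7 (Mw x y z a) (Pw x y z) s t = 1/2 * (if t = nx (nx s) then 1 else 0)"
    using mm_rows[OF assms(4)] False pw by simp
  show ?thesis using False unfolding Bplus_alt mpw by (simp only: p2 mm ediv_def) simp
qed

lemma fam7: "x + z/2 = 1/2 \<Longrightarrow> y + z/2 = 1/2 \<Longrightarrow> 0 \<le> x \<Longrightarrow> 0 \<le> y \<Longrightarrow> 0 \<le> z \<Longrightarrow>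
   family 7 2 (\<lambda>a s. 1/2) (Mw x y z)"
  unfolding family_def all7 all2 by (simp add: sum7 Mw_def nx_def)

lemma partvi: "\<exists>d pol M W. pos_policy d 2 pol \<and> family d 2 pol M \<and> family d 2 pol W \<and>
      (\<forall>a<2. meq d (Binv d 2 M [a]) (Binv d 2 W [a])) \<and>
      (\<forall>a<2. meq d (Bplus d 2 M a) (Bplus d 2 W a)) \<and>
      \<not> (\<forall>a<2. meq d (Bplusplus d 2 M a) (Bplusplus d 2 W a))"
proof (intro exI conjI)
  show "pos_policy 7 2 (\<lambda>a s. 1/2)" by (simp add: pos_policy_def)
  show "family 7 2 (\<lambda>a s. 1/2) (Mw (1/4) (1/4) (1/2))" by (rule fam7) auto
  show "family 7 2 (\<lambda>a s. 1/2) (Mw (1/10) (1/10) (4/5))" by (rule fam7) auto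
  show "\<forall>a<2. meq 7 (Binv 7 2 (Mw (1/4) (1/4) (1/2)) [a]) (Binv 7 2 (Mw (1/10) (1/10) (4/5)) [a])"
    by (simp add: meq_def Binv_form)
  show "\<forall>a<2. meq 7 (Bplus 7 2 (Mw (1/4) (1/4) (1/2)) a) (Bplus 7 2 (Mw (1/10) (1/10) (4/5)) a)"
    by (simp add: meq_def Bplus_form)
  show "\<not> (\<forall>a<2. meq 7 (Bplusplus 7 2 (Mw (1/4) (1/4) (1/2)) a) (Bplusplus 7 2 (Mw (1/10) (1/10) (4/5)) a))"
  proof
    assume "\<forall>a<2. meq 7 (Bplusplus 7 2 (Mw (1/4) (1/4) (1/2)) a) (Bplusplus 7 2 (Mw (1/10) (1/10) (4/5)) a)"
    then have "Bplusplus 7 2 (Mw (1/4) (1/4) (1/2)) 0 0 6 = Bplusplus 7 2 (Mw (1/10) (1/10) (4/5)) 0 0 6"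
      by (simp add: meq_def)
    then show False
      by (simp add: Bpp06)
  qed
qed



definition nv :: "nat \<Rightarrow> nat" where "nv s = (if s = 3 then 1 else s)"

definition Mv :: "real \<Rightarrow> real \<Rightarrow> real \<Rightarrow> nat \<Rightarrow> nat \<Rightarrow> nat \<Rightarrow> real" where
  "Mv x y z a s s' = (if s = 0 then (if a = 0 then (if s'=1 then x else if s'=3 then z/2 else 0)
      else (if s'=2 then y else if s'=3 then z/2 else 0)) else if s' = nv s then 1/2 else 0)"

lemma all4: "(\<forall>i<(4::nat). P i) \<longleftrightarrow> P 0 \<and> P 1 \<and> P 2 \<and> P 3"
  by (auto simp: numeral_eq_Suc less_Suc_eq)

lemma sum4: "(\<Sum>i<(4::nat). f i) = f 0 + f 1 + f 2 + (f 3 :: real)"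
  by (simp add: numeral_eq_Suc)

lemma partv: "\<exists>d pol M W. pos_policy d 2 pol \<and> family d 2 pol M \<and> family d 2 pol W \<and>
      (\<forall>a<2. meq d (Binv d 2 M [a]) (Binv d 2 W [a])) \<and>
      \<not> (\<forall>a<2. meq d (Bplus d 2 M a) (Bplus d 2 W a))"
proof (intro exI conjI)
  show "pos_policy 4 2 (\<lambda>a s. 1/2)" by (simp add: pos_policy_def)
  show "family 4 2 (\<lambda>a s. 1/2) (Mv (1/4) (1/4) (1/2))"
    by (simp add: family_def all4 all2 sum4 Mv_def nv_def)
  show "family 4 2 (\<lambda>a s. 1/2) (Mv (1/10) (1/10) (4/5))"
    by (simp add: family_def all4 all2 sum4 Mv_def nv_def)
  show "\<forall>a<2. meq 4 (Binv 4 2 (Mv (1/4) (1/4) (1/2)) [a]) (Binv 4 2 (Mv (1/10) (1/10) (4/5)) [a])"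
    by (simp add: meq_def all4 all2 sum4 sum2 Mv_def nv_def Binv_def ediv_def mprod_def mmult_def mone_def mplus_def)
  show "\<not> (\<forall>a<2. meq 4 (Bplus 4 2 (Mv (1/4) (1/4) (1/2)) a) (Bplus 4 2 (Mv (1/10) (1/10) (4/5)) a))"
    by (simp add: meq_def all4 all2 sum4 sum2 Mv_def nv_def Bplus_def ediv_def mmult_def mone_def mplus_def numeral_eq_Suc)
      (rule exI[of _ 0], simp)
qed


theorem proposition4:
  shows
  "(\<forall>i::nat. i \<ge> 1 \<longrightarrow>
     (\<exists>d pol M W. pos_policy d 2 pol \<and> family d 2 pol M \<and> family d 2 pol W \<and>
        (\<forall>s<d. \<forall>s'<d. (mplus 2 M s s' = 0 \<longleftrightarrow> mplus 2 W s s' = 0)) \<and>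
        (\<forall>as. actseq 2 as \<and> 1 \<le> length as \<and> length as \<le> i \<longrightarrow>
              meq d (Binv d 2 M as) (Binv d 2 W as)) \<and>
        (\<exists>as. actseq 2 as \<and> length as = i + 1 \<and>
              \<not> meq d (Binv d 2 M as) (Binv d 2 W as))))
   \<and>
   \<comment> \<open>(i) B^a does not determine M\<close>
   (\<exists>d pol M W. pos_policy d 2 pol \<and> family d 2 pol M \<and> family d 2 pol W \<and>
      (\<forall>a<2. meq d (Binv d 2 M [a]) (Binv d 2 W [a])) \<and>
      \<not> (\<forall>a<2. meq d (M a) (W a)))
   \<and>
   \<comment> \<open>(ii) B^a and B^{aa'} do not determine M\<close>
   (\<exists>d pol M W. pos_policy d 2 pol \<and> family d 2 pol M \<and> family d 2 pol W \<and>
      (\<forall>a<2. meq d (Binv d 2 M [a]) (Binv d 2 W [a])) \<and>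
      (\<forall>a<2. \<forall>a'<2. meq d (Binv d 2 M [a, a']) (Binv d 2 W [a, a'])) \<and>
      \<not> (\<forall>a<2. meq d (M a) (W a)))
   \<and>
   \<comment> \<open>(iii) B^a does not determine all B^{a_1...a_j}\<close>
   (\<exists>d pol M W. pos_policy d 2 pol \<and> family d 2 pol M \<and> family d 2 pol W \<and>
      (\<forall>a<2. meq d (Binv d 2 M [a]) (Binv d 2 W [a])) \<and>
      (\<exists>as. actseq 2 as \<and> \<not> meq d (Binv d 2 M as) (Binv d 2 W as)))
   \<and>
   \<comment> \<open>(iv) B^a and B^{aa'} do not determine all B^{a_1...a_j}\<close>
   (\<exists>d pol M W. pos_policy d 2 pol \<and> family d 2 pol M \<and> family d 2 pol W \<and>
      (\<forall>a<2. meq d (Binv d 2 M [a]) (Binv d 2 W [a])) \<and>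
      (\<forall>a<2. \<forall>a'<2. meq d (Binv d 2 M [a, a']) (Binv d 2 W [a, a'])) \<and>
      (\<exists>as. actseq 2 as \<and> \<not> meq d (Binv d 2 M as) (Binv d 2 W as)))
   \<and>
   \<comment> \<open>(v) B^a does not determine B^{a+}\<close>
   (\<exists>d pol M W. pos_policy d 2 pol \<and> family d 2 pol M \<and> family d 2 pol W \<and>
      (\<forall>a<2. meq d (Binv d 2 M [a]) (Binv d 2 W [a])) \<and>
      \<not> (\<forall>a<2. meq d (Bplus d 2 M a) (Bplus d 2 W a)))
   \<and>
   \<comment> \<open>(vi) B^a and B^{a+} do not determine B^{a++}\<close>
   (\<exists>d pol M W. pos_policy d 2 pol \<and> family d 2 pol M \<and> family d 2 pol W \<and>
      (\<forall>a<2. meq d (Binv d 2 M [a]) (Binv d 2 W [a])) \<and>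
      (\<forall>a<2. meq d (Bplus d 2 M a) (Bplus d 2 W a)) \<and>
      \<not> (\<forall>a<2. meq d (Bplusplus d 2 M a) (Bplusplus d 2 W a)))"
  proof -
  have P1: "\<And>i. 1 \<le> i \<Longrightarrow> (\<exists>d pol M W. pos_policy d 2 pol \<and> family d 2 pol M \<and> family d 2 pol W \<and>
        (\<forall>s<d. \<forall>s'<d. (mplus 2 M s s' = 0 \<longleftrightarrow> mplus 2 W s s' = 0)) \<and>
        (\<forall>as. actseq 2 as \<and> 1 \<le> length as \<and> length as \<le> i \<longrightarrow>
              meq d (Binv d 2 M as) (Binv d 2 W as)) \<and>
        (\<exists>as. actseq 2 as \<and> length as = i + 1 \<and>
              \<not> meq d (Binv d 2 M as) (Binv d 2 W as)))"
    using part1 by blast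
  obtain d pol M W where A: "pos_policy d 2 pol" "family d 2 pol M" "family d 2 pol W"
     "\<forall>as. actseq 2 as \<and> 1 \<le> length as \<and> length as \<le> 1 \<longrightarrow> meq d (Binv d 2 M as) (Binv d 2 W as)"
     "\<exists>as. actseq 2 as \<and> length as = 1 + 1 \<and> \<not> meq d (Binv d 2 M as) (Binv d 2 W as)"
     "\<not> (\<forall>a<2. meq d (M a) (W a))"
    using part1[OF order_refl[of "1::nat"]] by blast
  have A1: "\<forall>a<2. meq d (Binv d 2 M [a]) (Binv d 2 W [a])"
    using A(4) by (auto simp: actseq_def)
  obtain d' pol' M' W' where B: "pos_policy d' 2 pol'" "family d' 2 pol' M'" "family d' 2 pol' W'"
     "\<forall>as. actseq 2 as \<and> 1 \<le> length as \<and> length as \<le> 2 \<longrightarrow> meq d' (Binv d' 2 M' as) (Binv d' 2 W' as)"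
     "\<exists>as. actseq 2 as \<and> length as = 2 + 1 \<and> \<not> meq d' (Binv d' 2 M' as) (Binv d' 2 W' as)"
     "\<not> (\<forall>a<2. meq d' (M' a) (W' a))"
    using part1[of 2] by (metis one_le_numeral)
  have B1: "\<forall>a<2. meq d' (Binv d' 2 M' [a]) (Binv d' 2 W' [a])"
    using B(4) by (auto simp: actseq_def)
  have B2: "\<forall>a<2. \<forall>a'<2. meq d' (Binv d' 2 M' [a, a']) (Binv d' 2 W' [a, a'])"
    using B(4) by (auto simp: actseq_def)
  show ?thesis
    apply (intro conjI)
    subgoal using P1 by blast
    subgoal using A A1 by blast
    subgoal using B B1 B2 by blast
    subgoal using A A1 by blast
    subgoal using B B1 B2 by blast
    subgoal by (rule partv)
    subgoal by (rule partvi)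
    done
qed

end
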